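(* Let $n\ge3$, $r>0$ and let $F$ be the chord length distribution function of $\mathcal P_{n,r}$. Then $$F(s)=\Big[\Big(1-\frac{\pi}{n}\cot\frac{\pi}{n}\Big)\csc\frac{\pi}{n}+\frac{\pi}{n}\sec\frac{\pi}{n}\Big]\frac{s}{4r}$$ for $0\le s\le 2r\cos^2\frac{\pi}{2n}$ if $n=3$, and for $0\le s\le 2r\sin\frac{\pi}{n}$ if $n\ge4$.
   Context: $\mathcal P_{n,r}$ denotes the regular polygon with $n$ sides whose circumscribed circle has radius $r$ and centre at the origin, with perimeter $u=2nr\sin(\pi/n)$. Lines are $g(p,\phi)=\{x\cos\phi+y\sin\phi=p\}$, $p\ge0$, $0\le\phi<2\pi$, with the motion-invariant measure $\mu$ given by $dp\,d\phi$. For a line $g$ meeting the polygon, $|\chi(g)|$ is the length of the chord $g\cap\mathcal P_{n,r}$. The chord length distribution function is $F(s)=\frac1u\,\mu(\{g: g\cap\mathcal P_{n,r}\ne\emptyset,\ |\chi(g)|\le s\})$. *)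

theory Defs
  imports "HOL-Analysis.Analysis"
begin

text \<open>The regular n-gon inscribed in the circle of radius r centred at the origin,
  as the convex hull of its vertices (a vertex on the positive x-axis; by motion
  invariance the orientation is irrelevant).\<close>
definition reg_polygon :: "nat \<Rightarrow> real \<Rightarrow> (real \<times> real) set" where
  "reg_polygon n r = convex hull
     {(r * cos (2 * pi * real k / real n), r * sin (2 * pi * real k / real n)) | k. k < n}"

definition reg_perimeter :: "nat \<Rightarrow> real \<Rightarrow> real" where
  "reg_perimeter n r = 2 * real n * r * sin (pi / real n)"

definition gline :: "real \<Rightarrow> real \<Rightarrow> (real \<times> real) set" where
  "gline p \<phi> = {(x, y). x * cos \<phi> + y * sin \<phi> = p}"

text \<open>Length of the chord g \<inter> K (the chord is a segment, its length is its diameter).\<close>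
definition chord_length :: "(real \<times> real) set \<Rightarrow> real \<Rightarrow> real \<Rightarrow> real" where
  "chord_length K p \<phi> = diameter (gline p \<phi> \<inter> K)"

text \<open>Chord length distribution function, with the motion-invariant measure dp dphi
  on the parameter set p \<ge> 0, 0 \<le> phi < 2 pi (Lebesgue measure on the (p,phi)-plane).\<close>
definition chord_dist :: "nat \<Rightarrow> real \<Rightarrow> real \<Rightarrow> real" where
  "chord_dist n r s = measure lborel
     {(p::real, \<phi>::real). 0 \<le> p \<and> 0 \<le> \<phi> \<and> \<phi> < 2 * pi \<and>
        gline p \<phi> \<inter> reg_polygon n r \<noteq> {} \<and>
        chord_length (reg_polygon n r) p \<phi> \<le> s} / reg_perimeter n r"

end

theory Submission
  imports Defs
begin


lemma cos_int_per: "cos (x + of_int m * (2*pi)) = cos (x::real)"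
  using cos.plus_of_int[of x m] by simp
lemma sin_int_per: "sin (x + of_int m * (2*pi)) = sin (x::real)"
  using sin.plus_of_int[of x m] by simp

definition lev :: "real \<Rightarrow> real \<times> real \<Rightarrow> real" where
  "lev \<phi> x = fst x * cos \<phi> + snd x * sin \<phi>"
definition perp :: "real \<Rightarrow> real \<times> real \<Rightarrow> real" where
  "perp \<phi> x = - fst x * sin \<phi> + snd x * cos \<phi>"

lemma lev_add: "lev (\<phi> + \<theta>) x = lev \<phi> x * cos \<theta> + perp \<phi> x * sin \<theta>"
  by (simp add: lev_def perp_def cos_add sin_add algebra_simps)
lemma lev_diff: "lev (\<phi> - \<theta>) x = lev \<phi> x * cos \<theta> - perp \<phi> x * sin \<theta>"
  by (simp add: lev_def perp_def cos_diff sin_diff algebra_simps)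
lemma lev_pi: "lev (\<phi> + pi) x = - lev \<phi> x"
  by (simp add: lev_def)
lemma perp_pi: "perp (\<phi> + pi) x = - perp \<phi> x"
  by (simp add: perp_def)
lemma lev_lin: "lev \<phi> (a + u *\<^sub>R (b - a)) = lev \<phi> a + u * (lev \<phi> b - lev \<phi> a)"
  by (simp add: lev_def algebra_simps)
lemma perp_lin: "perp \<phi> (a + u *\<^sub>R (b - a)) = perp \<phi> a + u * (perp \<phi> b - perp \<phi> a)"
  by (simp add: perp_def algebra_simps)

lemma dist_lev_perp: "dist x y = sqrt ((lev \<phi> x - lev \<phi> y)^2 + (perp \<phi> x - perp \<phi> y)^2)"
proof -
  have "(lev \<phi> x - lev \<phi> y)^2 + (perp \<phi> x - perp \<phi> y)^2
      = ((fst x - fst y)^2 + (snd x - snd y)^2) * ((sin \<phi>)^2 + (cos \<phi>)^2)"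
    unfolding lev_def perp_def power2_eq_square by algebra
  then show ?thesis
    by (simp add: dist_Pair_Pair[of "fst x" "snd x" "fst y" "snd y", simplified] dist_real_def)
qed

lemma dist_same_lev: "lev \<phi> x = lev \<phi> y \<Longrightarrow> dist x y = \<bar>perp \<phi> x - perp \<phi> y\<bar>"
  by (simp add: dist_lev_perp[of x y \<phi>])

lemma gline_lev: "gline p \<phi> = {x. lev \<phi> x = p}"
  by (auto simp: gline_def lev_def)

lemma gline_pi: "gline p (\<phi> + pi) = gline (-p) \<phi>"
  by (auto simp: gline_lev lev_pi)

lemma gline_2pi: "gline p (\<phi> + 2*pi) = gline p \<phi>"
  by (auto simp: gline_def)



locale poly = fixes n :: nat and r :: real assumes n3: "3 \<le> n" and rpos: "0 < r"
begin

definition t where "t = pi / real n"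
definition vert :: "int \<Rightarrow> real \<times> real" where
  "vert j = (r * cos (2*t* of_int j), r * sin (2*t* of_int j))"
abbreviation K where "K \<equiv> reg_polygon n r"

lemma n_pos: "real n > 0" using n3 by simp
lemma nt: "real n * t = pi" using n_pos by (simp add: t_def)
lemma t_pos: "0 < t" using n_pos by (simp add: t_def)
lemma t_le: "t \<le> pi / 3"
  using n3 n_pos unfolding t_def by (simp add: field_simps)

lemma lev_vert: "lev \<phi> (vert j) = r * cos (2*t* of_int j - \<phi>)"
  by (simp add: lev_def vert_def cos_diff algebra_simps)

lemma vert_period: "vert (j + int n * m) = vert j"
proof -
  have "2*t* of_int (j + int n * m) = 2*t* of_int j + of_int m * (2*pi)"
    using nt by (simp add: algebra_simps)
  then show ?thesis unfolding vert_def by (simp add: cos_int_per sin_int_per)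
qed

lemma K_eq: "K = convex hull (range vert)"
proof -
  have "{(r * cos (2 * pi * real k / real n), r * sin (2 * pi * real k / real n)) | k. k < n} = range vert"
  proof (intro set_eqI iffI)
    fix x assume "x \<in> {(r * cos (2 * pi * real k / real n), r * sin (2 * pi * real k / real n)) | k. k < n}"
    then obtain k where "x = (r * cos (2 * pi * real k / real n), r * sin (2 * pi * real k / real n))" by auto
    then have "x = vert (int k)" by (simp add: vert_def t_def)
    then show "x \<in> range vert" by simp
  next
    fix x assume "x \<in> range vert"
    then obtain j where x: "x = vert j" by auto
    define k where "k = nat (j mod int n)"
    have jk: "j = int k + int n * (j div int n)" using n_pos by (simp add: k_def)
    have "x = vert (int k)" using vert_period[of "int k" "j div int n"] jk x by simp
    moreover have "k < n" using n_pos by (simp add: k_def nat_less_iff)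
    ultimately show "x \<in> {(r * cos (2 * pi * real k / real n), r * sin (2 * pi * real k / real n)) | k. k < n}"
      by (auto simp: vert_def t_def)
  qed
  then show ?thesis by (simp add: reg_polygon_def)
qed

lemma convex_K: "convex K" by (simp add: K_eq)
lemma vert_in_K: "vert j \<in> K" by (simp add: K_eq hull_inc)
lemma compact_K: "compact K"
proof -
  have "range vert = vert ` {0..<int n}"
  proof (intro set_eqI iffI)
    fix x assume "x \<in> range vert"
    then obtain j where x: "x = vert j" by auto
    have "x = vert (j mod int n)" using vert_period[of "j mod int n" "j div int n"] x by simp
    moreover have "j mod int n \<in> {0..<int n}" using n_pos by simp
    ultimately show "x \<in> vert ` {0..<int n}" by blast
  qed auto
  then show ?thesis by (simp add: K_eq compact_convex_hull finite_imp_compact)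
qed
lemma bounded_K: "bounded K" using compact_K compact_imp_bounded by blast

lemma cos_odd_le: "cos (of_int (2*m+1) * t) \<le> cos t"
proof -
  define q where "q = (2*m+1) mod (2 * int n)"
  define d where "d = (2*m+1) div (2 * int n)"
  have qd: "2*m+1 = q + 2 * int n * d" by (simp add: q_def d_def)
  have q0: "0 \<le> q" "q < 2 * int n" using n_pos by (simp_all add: q_def)
  have "q \<noteq> 0"
  proof
    assume "q = 0"
    then have "2*m+1 = 2 * (int n * d)" using qd by simp
    then show False by presburger
  qed
  with q0 have q1: "1 \<le> q" by simp
  have "of_int (2*m+1) * t = of_int q * t + of_int d * (2*pi)"
    using qd nt by (simp add: algebra_simps)
  then have c: "cos (of_int (2*m+1) * t) = cos (of_int q * t)"
    by (simp add: cos_int_per)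
  show ?thesis
  proof (cases "q \<le> int n")
    case True
    have "t \<le> of_int q * t" using q1 t_pos by simp
    moreover have "of_int q * t \<le> pi"
    proof -
      have "real_of_int q \<le> real n" using True by linarith
      then have "of_int q * t \<le> real n * t" using t_pos by (intro mult_right_mono) auto
      then show ?thesis using nt by simp
    qed
    ultimately show ?thesis unfolding c using t_pos t_le pi_gt3
      by (subst cos_mono_le_eq) auto
  next
    case False
    have "cos (of_int q * t) = cos (2*pi - of_int q * t)" by (simp add: cos_diff)
    also have "2*pi - of_int q * t = of_int (2 * int n - q) * t" using nt by (simp add: algebra_simps)
    finally have c2: "cos (of_int q * t) = cos (of_int (2 * int n - q) * t)" .
    have "t \<le> of_int (2 * int n - q) * t" using q0 t_pos by simp
    moreover have "of_int (2 * int n - q) * t \<le> pi"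
    proof -
      have "real_of_int (2 * int n - q) \<le> real n" using False by linarith
      then have "of_int (2 * int n - q) * t \<le> real n * t" using t_pos by (intro mult_right_mono) auto
      then show ?thesis using nt by simp
    qed
    ultimately show ?thesis unfolding c c2 using t_pos t_le pi_gt3
      by (subst cos_mono_le_eq) auto
  qed
qed

lemma half: assumes "x \<in> K" shows "lev (of_int (2*j+1) * t) x \<le> r * cos t"
proof -
  have "K \<subseteq> {x. inner (cos (of_int (2*j+1) * t), sin (of_int (2*j+1) * t)) x \<le> r * cos t}"
    unfolding K_eq
  proof (rule hull_minimal)
    show "range vert \<subseteq> {x. inner (cos (of_int (2*j+1) * t), sin (of_int (2*j+1) * t)) x \<le> r * cos t}"
    proof -
      have "inner (cos (of_int (2*j+1) * t), sin (of_int (2*j+1) * t)) (vert i) \<le> r * cos t" for i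
      proof -
      have "inner (cos (of_int (2*j+1) * t), sin (of_int (2*j+1) * t)) (vert i) = lev (of_int (2*j+1) * t) (vert i)"
        by (simp add: lev_def vert_def)
      also have "\<dots> = r * cos (of_int (2*(i-j-1)+1) * t)"
        unfolding lev_vert by (simp add: algebra_simps)
      also have "\<dots> \<le> r * cos t" using cos_odd_le[of "i-j-1"] rpos by (simp add: mult_left_mono)
      finally show ?thesis .
      qed
      then show ?thesis by auto
    qed
  qed (rule convex_halfspace_le)
  moreover have "inner (cos (of_int (2*j+1) * t), sin (of_int (2*j+1) * t)) x = lev (of_int (2*j+1) * t) x"
    by (cases x) (simp add: lev_def)
  ultimately show ?thesis using assms by auto
qed

end


lemma lev_comb: "lev \<phi> ((1 - u) *\<^sub>R a + u *\<^sub>R b) = (1 - u) * lev \<phi> a + u * lev \<phi> b"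
  by (simp add: lev_def algebra_simps)
lemma perp_comb: "perp \<phi> ((1 - u) *\<^sub>R a + u *\<^sub>R b) = (1 - u) * perp \<phi> a + u * perp \<phi> b"
  by (simp add: perp_def algebra_simps)

context poly begin

definition "aa = r * cos t"
definition psi :: "real \<Rightarrow> int \<Rightarrow> real" where "psi \<phi> k = \<phi> - 2 * t * of_int k"
definition "Up \<phi> k p = (aa - p * cos (t - psi \<phi> k)) / sin (t - psi \<phi> k)"
definition "Lo \<phi> k p = (p * cos (t + psi \<phi> k) - aa) / sin (t + psi \<phi> k)"
definition "hh \<phi> k = r * cos (psi \<phi> k)"
definition "WW \<phi> k = sin (2*t) / (sin (t - psi \<phi> k) * sin (t + psi \<phi> k))"

lemma sin_pos_lt: "0 < x \<Longrightarrow> x < 2 * t \<Longrightarrow> 0 < sin x"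
  using t_le pi_gt3 by (intro sin_gt_zero) auto

context fixes \<phi> k assumes fr: "\<bar>psi \<phi> k\<bar> < t"
begin

lemma sA: "0 < sin (t - psi \<phi> k)" using fr by (intro sin_pos_lt) auto
lemma sB: "0 < sin (t + psi \<phi> k)" using fr by (intro sin_pos_lt) auto
lemma s2t: "0 < sin (2*t)" using t_pos t_le pi_gt3 by (intro sin_gt_zero) auto
lemma WW_pos: "0 < WW \<phi> k" using sA sB s2t by (simp add: WW_def)

lemma ang1: "of_int (2*k+1) * t = \<phi> + (t - psi \<phi> k)" by (simp add: psi_def algebra_simps)
lemma ang2: "of_int (2*(k-1)+1) * t = \<phi> - (t + psi \<phi> k)" by (simp add: psi_def algebra_simps)

lemma bounds:
  assumes "x \<in> K" "lev \<phi> x = p"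
  shows "perp \<phi> x \<le> Up \<phi> k p" "Lo \<phi> k p \<le> perp \<phi> x"
proof -
  have "lev (of_int (2*k+1) * t) x \<le> aa" unfolding aa_def by (rule half[OF assms(1)])
  then have "p * cos (t - psi \<phi> k) + perp \<phi> x * sin (t - psi \<phi> k) \<le> aa"
    unfolding ang1 lev_add assms(2) .
  then show "perp \<phi> x \<le> Up \<phi> k p" using sA unfolding Up_def by (simp add: field_simps)
  have "lev (of_int (2*(k-1)+1) * t) x \<le> aa" unfolding aa_def by (rule half[OF assms(1)])
  then have "p * cos (t + psi \<phi> k) - perp \<phi> x * sin (t + psi \<phi> k) \<le> aa"
    unfolding ang2 lev_diff assms(2) .
  then show "Lo \<phi> k p \<le> perp \<phi> x" using sB unfolding Lo_def by (simp add: field_simps)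
qed

lemma ident: "Up \<phi> k p - Lo \<phi> k p = (hh \<phi> k - p) * WW \<phi> k"
proof -
  define A where "A = t - psi \<phi> k"
  define B where "B = t + psi \<phi> k"
  have tAB: "t = (A + B) / 2" and pAB: "psi \<phi> k = (B - A) / 2" by (simp_all add: A_def B_def)
  have sa: "sin A > 0" "sin B > 0" using sA sB by (simp_all add: A_def B_def)
  have key: "r * cos ((A+B)/2) * (sin A + sin B) = r * cos ((B-A)/2) * sin (A + B)"
  proof -
    have "sin A + sin B = 2 * sin ((A+B)/2) * cos ((A-B)/2)" by (rule sin_plus_sin)
    moreover have "sin (A+B) = 2 * sin ((A+B)/2) * cos ((A+B)/2)"
    proof -
      have e: "2 * ((A+B)/2) = A + B" by simp
      show ?thesis using sin_double[of "(A+B)/2"] unfolding e .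
    qed
    moreover have "cos ((A-B)/2) = cos ((B-A)/2)" by (metis cos_minus minus_diff_eq diff_divide_distrib)
    ultimately show ?thesis by simp
  qed
  have "Up \<phi> k p - Lo \<phi> k p = ((aa - p * cos A) * sin B + (aa - p * cos B) * sin A) / (sin A * sin B)"
    unfolding Up_def Lo_def A_def[symmetric] B_def[symmetric] using sa by (simp add: field_simps)
  also have "(aa - p * cos A) * sin B + (aa - p * cos B) * sin A = aa * (sin A + sin B) - p * sin (A + B)"
    by (simp add: sin_add algebra_simps)
  also have "\<dots> = (hh \<phi> k - p) * sin (A + B)"
    using key unfolding aa_def hh_def tAB pAB[symmetric] by (simp add: algebra_simps)
  finally show ?thesis unfolding WW_def A_def B_def by (simp add: algebra_simps)
qed

lemma top: assumes "x \<in> K" shows "lev \<phi> x \<le> hh \<phi> k"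
proof -
  have "Lo \<phi> k (lev \<phi> x) \<le> Up \<phi> k (lev \<phi> x)" using bounds[OF assms refl] by linarith
  then have "0 \<le> (hh \<phi> k - lev \<phi> x) * WW \<phi> k" using ident[of "lev \<phi> x"] by linarith
  then show ?thesis using WW_pos by (simp add: zero_le_mult_iff)
qed

lemma chord_le:
  assumes "gline p \<phi> \<inter> K \<noteq> {}"
  shows "p \<le> hh \<phi> k" "chord_length K p \<phi> \<le> (hh \<phi> k - p) * WW \<phi> k"
proof -
  obtain x where x: "x \<in> K" "lev \<phi> x = p" using assms by (auto simp: gline_lev)
  then show "p \<le> hh \<phi> k" using top[OF x(1)] by simp
  show "chord_length K p \<phi> \<le> (hh \<phi> k - p) * WW \<phi> k"
    unfolding chord_length_def
  proof (rule diameter_le)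
    show "gline p \<phi> \<inter> K \<noteq> {} \<or> 0 \<le> (hh \<phi> k - p) * WW \<phi> k" using assms by simp
    fix y z assume "y \<in> gline p \<phi> \<inter> K" "z \<in> gline p \<phi> \<inter> K"
    then have y: "y \<in> K" "lev \<phi> y = p" and z: "z \<in> K" "lev \<phi> z = p" by (auto simp: gline_lev)
    have "norm (y - z) = \<bar>perp \<phi> y - perp \<phi> z\<bar>"
      using dist_same_lev[of \<phi> y z] y z by (simp add: dist_norm)
    also have "\<dots> \<le> Up \<phi> k p - Lo \<phi> k p" using bounds[OF y] bounds[OF z] by linarith
    finally show "norm (y - z) \<le> (hh \<phi> k - p) * WW \<phi> k" using ident by simp
  qed
qed

lemma lev_vk: "lev \<phi> (vert k) = hh \<phi> k"
proof -
  have "2 * t * of_int k - \<phi> = - psi \<phi> k" by (simp add: psi_def)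
  then show ?thesis by (simp only: lev_vert hh_def cos_minus)
qed
lemma lev_vk1: "lev \<phi> (vert (k+1)) = r * cos (2*t - psi \<phi> k)"
  by (simp add: lev_vert psi_def algebra_simps)
lemma lev_vkm: "lev \<phi> (vert (k-1)) = r * cos (2*t + psi \<phi> k)"
proof -
  have "2 * t * of_int (k-1) - \<phi> = - (2*t + psi \<phi> k)" by (simp add: psi_def algebra_simps)
  then show ?thesis by (simp only: lev_vert cos_minus)
qed

lemma gap1: "lev \<phi> (vert (k+1)) < hh \<phi> k"
proof -
  have "cos (2*t - psi \<phi> k) < cos \<bar>psi \<phi> k\<bar>"
    using fr t_le pi_gt3 by (subst cos_mono_less_eq) auto
  then show ?thesis using rpos by (simp add: lev_vk1 hh_def)
qed
lemma gap2: "lev \<phi> (vert (k-1)) < hh \<phi> k"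
proof -
  have "cos (2*t + psi \<phi> k) < cos \<bar>psi \<phi> k\<bar>"
    using fr t_le pi_gt3 by (subst cos_mono_less_eq) auto
  then show ?thesis using rpos by (simp add: lev_vkm hh_def)
qed

lemma exact:
  assumes "lev \<phi> (vert (k+1)) \<le> p" "lev \<phi> (vert (k-1)) \<le> p" "p \<le> hh \<phi> k"
  shows "gline p \<phi> \<inter> K \<noteq> {}" "chord_length K p \<phi> = (hh \<phi> k - p) * WW \<phi> k"
    "\<exists>x\<in>K. \<exists>y\<in>K. lev \<phi> x = p \<and> lev \<phi> y = p \<and> perp \<phi> x - perp \<phi> y = (hh \<phi> k - p) * WW \<phi> k"
proof -
  define l1 where "l1 = (hh \<phi> k - p) / (hh \<phi> k - lev \<phi> (vert (k+1)))"
  define l2 where "l2 = (hh \<phi> k - p) / (hh \<phi> k - lev \<phi> (vert (k-1)))"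
  define x1 where "x1 = (1 - l1) *\<^sub>R vert k + l1 *\<^sub>R vert (k+1)"
  define x2 where "x2 = (1 - l2) *\<^sub>R vert k + l2 *\<^sub>R vert (k-1)"
  have l1: "0 \<le> l1" "l1 \<le> 1" using gap1 assms by (auto simp: l1_def field_simps)
  have l2: "0 \<le> l2" "l2 \<le> 1" using gap2 assms by (auto simp: l2_def field_simps)
  have x1K: "x1 \<in> K"
  proof -
    have "x1 \<in> closed_segment (vert k) (vert (k+1))" unfolding x1_def in_segment using l1 by blast
    then show ?thesis using closed_segment_subset[OF vert_in_K[of k] vert_in_K[of "k+1"] convex_K] by blast
  qed
  have x2K: "x2 \<in> K"
  proof -
    have "x2 \<in> closed_segment (vert k) (vert (k-1))" unfolding x2_def in_segment using l2 by blast
    then show ?thesis using closed_segment_subset[OF vert_in_K[of k] vert_in_K[of "k-1"] convex_K] by blast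
  qed
  have lx1: "lev \<phi> x1 = p"
  proof -
    have "l1 * (hh \<phi> k - lev \<phi> (vert (k+1))) = hh \<phi> k - p" using gap1 by (simp add: l1_def)
    then show ?thesis unfolding x1_def lev_comb lev_vk by (simp add: algebra_simps)
  qed
  have lx2: "lev \<phi> x2 = p"
  proof -
    have "l2 * (hh \<phi> k - lev \<phi> (vert (k-1))) = hh \<phi> k - p" using gap2 by (simp add: l2_def)
    then show ?thesis unfolding x2_def lev_comb lev_vk by (simp add: algebra_simps)
  qed
  have e1: "lev (of_int (2*k+1) * t) x1 = aa"
  proof -
    have "lev (of_int (2*k+1) * t) (vert k) = aa" "lev (of_int (2*k+1) * t) (vert (k+1)) = aa"
      by (simp_all add: lev_vert aa_def algebra_simps)
    then show ?thesis unfolding x1_def lev_comb by (simp add: algebra_simps)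
  qed
  have e2: "lev (of_int (2*(k-1)+1) * t) x2 = aa"
  proof -
    have "lev (of_int (2*(k-1)+1) * t) (vert k) = aa" "lev (of_int (2*(k-1)+1) * t) (vert (k-1)) = aa"
    proof -
      have "2 * t * of_int k - of_int (2*(k-1)+1) * t = t" by (simp add: algebra_simps)
      then show "lev (of_int (2*(k-1)+1) * t) (vert k) = aa" by (simp add: lev_vert aa_def)
      have "2 * t * of_int (k-1) - of_int (2*(k-1)+1) * t = -t" by (simp add: algebra_simps)
      then show "lev (of_int (2*(k-1)+1) * t) (vert (k-1)) = aa" by (simp add: lev_vert aa_def)
    qed
    then show ?thesis unfolding x2_def lev_comb by (simp add: algebra_simps)
  qed
  have p1: "perp \<phi> x1 = Up \<phi> k p"
  proof -
    have "p * cos (t - psi \<phi> k) + perp \<phi> x1 * sin (t - psi \<phi> k) = aa"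
      using e1 unfolding ang1 lev_add lx1 .
    then show ?thesis using sA unfolding Up_def by (simp add: field_simps)
  qed
  have p2: "perp \<phi> x2 = Lo \<phi> k p"
  proof -
    have "p * cos (t + psi \<phi> k) - perp \<phi> x2 * sin (t + psi \<phi> k) = aa"
      using e2 unfolding ang2 lev_diff lx2 .
    then show ?thesis using sB unfolding Lo_def by (simp add: field_simps)
  qed
  have in1: "x1 \<in> gline p \<phi> \<inter> K" using x1K lx1 by (simp add: gline_lev)
  have in2: "x2 \<in> gline p \<phi> \<inter> K" using x2K lx2 by (simp add: gline_lev)
  then show ne: "gline p \<phi> \<inter> K \<noteq> {}" by auto
  show "\<exists>x\<in>K. \<exists>y\<in>K. lev \<phi> x = p \<and> lev \<phi> y = p \<and> perp \<phi> x - perp \<phi> y = (hh \<phi> k - p) * WW \<phi> k"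
    using x1K x2K lx1 lx2 p1 p2 ident[of p] by (intro bexI[of _ x1] bexI[of _ x2]) auto
  have "dist x1 x2 \<le> chord_length K p \<phi>" unfolding chord_length_def
    by (rule diameter_bounded_bound[OF _ in1 in2]) (meson bounded_K bounded_subset inf_le2)
  moreover have "dist x1 x2 = (hh \<phi> k - p) * WW \<phi> k"
    using dist_same_lev[of \<phi> x1 x2] lx1 lx2 p1 p2 ident[of p] WW_pos assms(3) by simp
  ultimately show "chord_length K p \<phi> = (hh \<phi> k - p) * WW \<phi> k"
    using chord_le(2)[OF ne] by linarith
qed

end
end


context poly begin

lemma comb:
  assumes "x1 \<in> K" "y1 \<in> K" "lev \<phi> x1 = p1" "lev \<phi> y1 = p1" "perp \<phi> y1 - perp \<phi> x1 = L1"
    "x2 \<in> K" "y2 \<in> K" "lev \<phi> x2 = p2" "lev \<phi> y2 = p2" "perp \<phi> y2 - perp \<phi> x2 = L2"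
    "0 \<le> L1" "0 \<le> L2" "0 \<le> u" "u \<le> 1"
  shows "(1 - u) * L1 + u * L2 \<le> chord_length K ((1 - u) * p1 + u * p2) \<phi>"
proof -
  define z1 where "z1 = (1 - u) *\<^sub>R x1 + u *\<^sub>R x2"
  define z2 where "z2 = (1 - u) *\<^sub>R y1 + u *\<^sub>R y2"
  have z1K: "z1 \<in> K" unfolding z1_def using convex_K assms
    by (intro convexD) auto
  have z2K: "z2 \<in> K" unfolding z2_def using convex_K assms
    by (intro convexD) auto
  have l1: "lev \<phi> z1 = (1 - u) * p1 + u * p2" "lev \<phi> z2 = (1 - u) * p1 + u * p2"
    unfolding z1_def z2_def lev_comb using assms by simp_all
  have in1: "z1 \<in> gline ((1 - u) * p1 + u * p2) \<phi> \<inter> K" using z1K l1 by (simp add: gline_lev)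
  have in2: "z2 \<in> gline ((1 - u) * p1 + u * p2) \<phi> \<inter> K" using z2K l1 by (simp add: gline_lev)
  have "dist z1 z2 \<le> chord_length K ((1 - u) * p1 + u * p2) \<phi>" unfolding chord_length_def
    by (rule diameter_bounded_bound[OF _ in1 in2]) (meson bounded_K bounded_subset inf_le2)
  moreover have "dist z1 z2 = \<bar>perp \<phi> z1 - perp \<phi> z2\<bar>" using dist_same_lev l1 by simp
  moreover have "perp \<phi> z2 - perp \<phi> z1 = (1 - u) * L1 + u * L2"
    unfolding z1_def z2_def perp_comb using assms(5,10) by (simp add: algebra_simps)
  moreover have "0 \<le> (1 - u) * L1 + u * L2" using assms by simp
  ultimately show ?thesis by linarith
qed

definition "Qs s \<phi> = {p. gline p \<phi> \<inter> K \<noteq> {} \<and> chord_length K p \<phi> \<le> s}"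

lemma lev_neg: "lev \<phi> x = - lev (\<phi> + pi) x" by (simp add: lev_pi)
lemma perp_neg: "perp \<phi> x = - perp (\<phi> + pi) x" by (simp add: perp_pi)
lemma chord_pi: "chord_length K p \<phi> = chord_length K (-p) (\<phi> + pi)"
  by (simp add: chord_length_def gline_pi)
lemma gline_pi': "gline p \<phi> = gline (-p) (\<phi> + pi)" by (simp add: gline_pi)

context fixes \<phi> :: real and k k' :: int and s :: real
  assumes fr1: "\<bar>psi \<phi> k\<bar> < t" and fr2: "\<bar>psi (\<phi> + pi) k'\<bar> < t" and s0: "0 \<le> s"
begin

abbreviation "h \<equiv> hh \<phi> k"
abbreviation "h' \<equiv> hh (\<phi> + pi) k'"
abbreviation "W \<equiv> WW \<phi> k"
abbreviation "W' \<equiv> WW (\<phi> + pi) k'"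
abbreviation "a1 \<equiv> lev \<phi> (vert (k+1))"
abbreviation "a2 \<equiv> lev \<phi> (vert (k-1))"
abbreviation "b1 \<equiv> lev \<phi> (vert (k'+1))"
abbreviation "b2 \<equiv> lev \<phi> (vert (k'-1))"

lemma Wp: "0 < W" using WW_pos[OF fr1] .
lemma Wp': "0 < W'" using WW_pos[OF fr2] .

lemma botK: "x \<in> K \<Longrightarrow> - h' \<le> lev \<phi> x"
  using top[OF fr2, of x] lev_neg[of \<phi> x] by simp

lemma lev_vk': "lev \<phi> (vert k') = - h'"
  using lev_vk[OF fr2] lev_neg[of \<phi> "vert k'"] by simp

lemma meets: "gline p \<phi> \<inter> K \<noteq> {} \<longleftrightarrow> - h' \<le> p \<and> p \<le> h"
proof
  assume "gline p \<phi> \<inter> K \<noteq> {}"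
  then obtain x where "x \<in> K" "lev \<phi> x = p" by (auto simp: gline_lev)
  then show "- h' \<le> p \<and> p \<le> h" using botK top[OF fr1] by fastforce
next
  assume p: "- h' \<le> p \<and> p \<le> h"
  have hpos: "- h' < h"
  proof -
    have "- h' \<le> a1" using botK[OF vert_in_K] .
    then show ?thesis using gap1[OF fr1] by linarith
  qed
  define u where "u = (p + h') / (h + h')"
  have u: "0 \<le> u" "u \<le> 1" using p hpos by (auto simp: u_def field_simps)
  define x where "x = (1 - u) *\<^sub>R vert k' + u *\<^sub>R vert k"
  have "x \<in> K" unfolding x_def using convex_K vert_in_K u by (intro convexD) auto
  moreover have "lev \<phi> x = p"
  proof -
    have "u * (h + h') = p + h'" using hpos by (simp add: u_def)
    then show ?thesis unfolding x_def lev_comb lev_vk[OF fr1] lev_vk' by (simp add: algebra_simps)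
  qed
  ultimately show "gline p \<phi> \<inter> K \<noteq> {}" by (auto simp: gline_lev)
qed

lemma exact_bot:
  assumes "p \<le> b1" "p \<le> b2" "- h' \<le> p"
  shows "chord_length K p \<phi> = (p + h') * W'"
    "\<exists>x\<in>K. \<exists>y\<in>K. lev \<phi> x = p \<and> lev \<phi> y = p \<and> perp \<phi> y - perp \<phi> x = (p + h') * W'"
proof -
  have a: "lev (\<phi>+pi) (vert (k'+1)) \<le> -p" "lev (\<phi>+pi) (vert (k'-1)) \<le> -p" "-p \<le> h'"
    using assms lev_neg[of \<phi> "vert (k'+1)"] lev_neg[of \<phi> "vert (k'-1)"] by auto
  show "chord_length K p \<phi> = (p + h') * W'"
    using exact(2)[OF fr2 a] chord_pi[of p \<phi>] by simp
  obtain x y where "x \<in> K" "y \<in> K" "lev (\<phi>+pi) x = -p" "lev (\<phi>+pi) y = -p"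
    "perp (\<phi>+pi) x - perp (\<phi>+pi) y = (h' - - p) * W'"
    using exact(3)[OF fr2 a] by blast
  then show "\<exists>x\<in>K. \<exists>y\<in>K. lev \<phi> x = p \<and> lev \<phi> y = p \<and> perp \<phi> y - perp \<phi> x = (p + h') * W'"
    using lev_neg[of \<phi> x] lev_neg[of \<phi> y] perp_neg[of \<phi> x] perp_neg[of \<phi> y]
    by (intro bexI[of _ x] bexI[of _ y]) (auto simp: algebra_simps)
qed

lemma Qchar:
  assumes H1a: "s / W \<le> h - a1" and H1b: "s / W \<le> h - a2"
    and H2a: "s / W' \<le> h' + b1" and H2b: "s / W' \<le> h' + b2"
    and H3: "min b1 b2 \<le> max a1 a2"
    and H4: "max a1 a2 = min b1 b2 \<or>
       (s / W < h - a1 \<and> s / W < h - a2 \<and> s / W' < h' + b1 \<and> s / W' < h' + b2)"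
  shows "- h' + s / W' \<le> h - s / W"
    "Qs s \<phi> = {- h' .. - h' + s / W'} \<union> {h - s / W .. h}"
proof -
  have fW: "s / W * W = s" using Wp by simp
  have fW': "s / W' * W' = s" using Wp' by simp
  have f0: "0 \<le> s / W" "0 \<le> s / W'" using s0 Wp Wp' by auto
  show ord: "- h' + s / W' \<le> h - s / W" using H1a H1b H2a H2b H3 H4 by linarith
  show "Qs s \<phi> = {- h' .. - h' + s / W'} \<union> {h - s / W .. h}"
  proof (intro set_eqI iffI)
    fix p assume "p \<in> {- h' .. - h' + s / W'} \<union> {h - s / W .. h}"
    then consider "- h' \<le> p" "p \<le> - h' + s / W'" | "h - s / W \<le> p" "p \<le> h" by auto
    then show "p \<in> Qs s \<phi>"
    proof cases
      case 1
      have m: "gline p \<phi> \<inter> K \<noteq> {}" using meets 1 ord f0 by auto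
      then have m': "gline (-p) (\<phi> + pi) \<inter> K \<noteq> {}" using gline_pi' by simp
      have "chord_length K p \<phi> \<le> (h' - - p) * W'" using chord_le(2)[OF fr2 m'] chord_pi by simp
      also have "\<dots> \<le> s / W' * W'" using 1 Wp' by (intro mult_right_mono) auto
      finally show ?thesis using m fW' by (simp add: Qs_def)
    next
      case 2
      have m: "gline p \<phi> \<inter> K \<noteq> {}" using meets 2 ord f0 by auto
      have "chord_length K p \<phi> \<le> (h - p) * W" using chord_le(2)[OF fr1 m] by simp
      also have "\<dots> \<le> s / W * W" using 2 Wp by (intro mult_right_mono) auto
      finally show ?thesis using m fW by (simp add: Qs_def)
    qed
  next
    fix p assume "p \<in> Qs s \<phi>"
    then have m: "gline p \<phi> \<inter> K \<noteq> {}" and c: "chord_length K p \<phi> \<le> s" by (auto simp: Qs_def)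
    from m have pb: "- h' \<le> p" "p \<le> h" using meets by auto
    show "p \<in> {- h' .. - h' + s / W'} \<union> {h - s / W .. h}"
    proof (rule ccontr)
      assume "p \<notin> {- h' .. - h' + s / W'} \<union> {h - s / W .. h}"
      then have mid: "- h' + s / W' < p" "p < h - s / W" using pb by auto
      consider "a1 \<le> p \<and> a2 \<le> p" | "p \<le> b1 \<and> p \<le> b2" | "min b1 b2 < p \<and> p < max a1 a2" by linarith
      then show False
      proof cases
        case 1
        then have "chord_length K p \<phi> = (h - p) * W" using exact(2)[OF fr1] pb by auto
        moreover have "s / W * W < (h - p) * W" using mid Wp by (intro mult_strict_right_mono) auto
        ultimately show False using c fW by linarith
      next
        case 2
        then have "chord_length K p \<phi> = (p + h') * W'" using exact_bot pb by auto
        moreover have "s / W' * W' < (p + h') * W'" using mid Wp' by (intro mult_strict_right_mono) auto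
        ultimately show False using c fW' by linarith
      next
        case 3
        then have st: "s / W < h - a1" "s / W < h - a2" "s / W' < h' + b1" "s / W' < h' + b2"
          using H4 by auto
        define pa where "pa = min b1 b2"
        define pb' where "pb' = max a1 a2"
        have g1: "a1 < h" "a2 < h" using gap1[OF fr1] gap2[OF fr1] by auto
        have pbh: "pb' \<le> h" using g1 by (simp add: pb'_def)
        have pah: "- h' \<le> pa" using botK[OF vert_in_K] by (simp add: pa_def)
        obtain x1 y1 where xy1: "x1 \<in> K" "y1 \<in> K" "lev \<phi> x1 = pa" "lev \<phi> y1 = pa"
            "perp \<phi> y1 - perp \<phi> x1 = (pa + h') * W'"
          using exact_bot(2)[of pa] pah by (auto simp: pa_def)
        obtain y2 x2 where xy2: "y2 \<in> K" "x2 \<in> K" "lev \<phi> y2 = pb'" "lev \<phi> x2 = pb'"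
            "perp \<phi> y2 - perp \<phi> x2 = (h - pb') * W"
          using exact(3)[OF fr1, of pb'] pbh by (auto simp: pb'_def)
        define u where "u = (p - pa) / (pb' - pa)"
        have d: "pa < p" "p < pb'" using 3 by (simp_all add: pa_def pb'_def)
        have u: "0 \<le> u" "u \<le> 1" using d by (auto simp: u_def field_simps)
        have "u * (pb' - pa) = p - pa" using d by (simp add: u_def)
        then have pu: "(1 - u) * pa + u * pb' = p" by (simp add: algebra_simps)
        have L1: "s < (pa + h') * W'"
        proof -
          have "s / W' < pa + h'" using st by (simp add: pa_def)
          then show ?thesis using Wp' fW' by (metis mult_strict_right_mono)
        qed
        have L2: "s < (h - pb') * W"
        proof -
          have "s / W < h - pb'" using st by (simp add: pb'_def)
          then show ?thesis using Wp fW by (metis mult_strict_right_mono)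
        qed
        have "(1 - u) * ((pa + h') * W') + u * ((h - pb') * W) \<le> chord_length K p \<phi>"
          using comb[OF xy1(1,2,3,4,5) xy2(2,1,4,3,5) _ _ u] L1 L2 s0 pu by auto
        moreover have "s \<le> (1 - u) * ((pa + h') * W') + u * ((h - pb') * W)"
        proof -
          have "(1 - u) * s \<le> (1 - u) * ((pa + h') * W')" using L1 u by (intro mult_left_mono) auto
          moreover have "u * s \<le> u * ((h - pb') * W)" using L2 u by (intro mult_left_mono) auto
          ultimately show ?thesis by (simp add: algebra_simps)
        qed
        moreover have "s < (1 - u) * ((pa + h') * W') + u * ((h - pb') * W) \<or> chord_length K p \<phi> > s"
        proof (cases "u = 0")
          case True then show ?thesis using L1 by simp
        next
          case False
          then have "u * s < u * ((h - pb') * W)" using L2 u by (intro mult_strict_left_mono) auto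
          moreover have "(1 - u) * s \<le> (1 - u) * ((pa + h') * W')" using L1 u by (intro mult_left_mono) auto
          ultimately show ?thesis by (simp add: algebra_simps)
        qed
        ultimately show False using c by linarith
      qed
    qed
  qed
qed

end
end


context poly begin

definition "goodc s \<longleftrightarrow> (\<forall>\<theta>. 0 < \<theta> \<and> \<theta> < 2*t \<longrightarrow> s * sin \<theta> \<le> 2 * r * sin t * sin (2*t))"
definition "goods s \<longleftrightarrow> (\<forall>\<theta>. 0 < \<theta> \<and> \<theta> < 2*t \<longrightarrow> s * sin \<theta> < 2 * r * sin t * sin (2*t))"

lemma goods_goodc: "goods s \<Longrightarrow> goodc s" by (auto simp: goods_def goodc_def less_imp_le)

lemma cosdiff: "cos (t0 - A) - cos (t0 + A) = 2 * sin t0 * sin (A::real)"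
  by (simp add: cos_add cos_diff)

context fixes \<phi> k assumes fr: "\<bar>psi \<phi> k\<bar> < t"
begin

lemma d1: "hh \<phi> k - lev \<phi> (vert (k+1)) = 2 * r * sin t * sin (t - psi \<phi> k)"
proof -
  have "cos (t - (t - psi \<phi> k)) - cos (t + (t - psi \<phi> k)) = 2 * sin t * sin (t - psi \<phi> k)"
    by (rule cosdiff)
  then show ?thesis unfolding lev_vk1[OF fr] hh_def
    by (simp add: algebra_simps right_diff_distrib[symmetric])
qed

lemma d2: "hh \<phi> k - lev \<phi> (vert (k-1)) = 2 * r * sin t * sin (t + psi \<phi> k)"
proof -
  have "cos (t - (t + psi \<phi> k)) - cos (t + (t + psi \<phi> k)) = 2 * sin t * sin (t + psi \<phi> k)"
    by (rule cosdiff)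
  then have "cos (psi \<phi> k) - cos (2*t + psi \<phi> k) = 2 * sin t * sin (t + psi \<phi> k)"
    by (simp add: algebra_simps)
  then show ?thesis unfolding lev_vkm[OF fr] hh_def
    by (simp add: algebra_simps right_diff_distrib[symmetric])
qed

lemma fform: "s / WW \<phi> k = s * sin (t - psi \<phi> k) * sin (t + psi \<phi> k) / sin (2*t)"
  by (simp add: WW_def)

lemma H1:
  assumes "goodc s"
  shows "s / WW \<phi> k \<le> hh \<phi> k - lev \<phi> (vert (k+1))" "s / WW \<phi> k \<le> hh \<phi> k - lev \<phi> (vert (k-1))"
proof -
  have c1: "s * sin (t + psi \<phi> k) \<le> 2 * r * sin t * sin (2*t)"
  proof -
    have "0 < t + psi \<phi> k \<and> t + psi \<phi> k < 2*t" using fr by auto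
    then show ?thesis using assms unfolding goodc_def by blast
  qed
  have c2: "s * sin (t - psi \<phi> k) \<le> 2 * r * sin t * sin (2*t)"
  proof -
    have "0 < t - psi \<phi> k \<and> t - psi \<phi> k < 2*t" using fr by auto
    then show ?thesis using assms unfolding goodc_def by blast
  qed
  have "s / WW \<phi> k = (sin (t - psi \<phi> k) / sin (2*t)) * (s * sin (t + psi \<phi> k))"
    unfolding fform by simp
  also have "\<dots> \<le> (sin (t - psi \<phi> k) / sin (2*t)) * (2 * r * sin t * sin (2*t))"
    using sA[OF fr] s2t[OF fr] c1 by (intro mult_left_mono) auto
  also have "\<dots> = hh \<phi> k - lev \<phi> (vert (k+1))" unfolding d1 using s2t[OF fr] by simp
  finally show "s / WW \<phi> k \<le> hh \<phi> k - lev \<phi> (vert (k+1))" .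
  have "s / WW \<phi> k = (sin (t + psi \<phi> k) / sin (2*t)) * (s * sin (t - psi \<phi> k))"
    unfolding fform by simp
  also have "\<dots> \<le> (sin (t + psi \<phi> k) / sin (2*t)) * (2 * r * sin t * sin (2*t))"
    using sB[OF fr] s2t[OF fr] c2 by (intro mult_left_mono) auto
  also have "\<dots> = hh \<phi> k - lev \<phi> (vert (k-1))" unfolding d2 using s2t[OF fr] by simp
  finally show "s / WW \<phi> k \<le> hh \<phi> k - lev \<phi> (vert (k-1))" .
qed

lemma H1s:
  assumes "goods s"
  shows "s / WW \<phi> k < hh \<phi> k - lev \<phi> (vert (k+1))" "s / WW \<phi> k < hh \<phi> k - lev \<phi> (vert (k-1))"
proof -
  have c1: "s * sin (t + psi \<phi> k) < 2 * r * sin t * sin (2*t)"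
  proof -
    have "0 < t + psi \<phi> k \<and> t + psi \<phi> k < 2*t" using fr by auto
    then show ?thesis using assms unfolding goods_def by blast
  qed
  have c2: "s * sin (t - psi \<phi> k) < 2 * r * sin t * sin (2*t)"
  proof -
    have "0 < t - psi \<phi> k \<and> t - psi \<phi> k < 2*t" using fr by auto
    then show ?thesis using assms unfolding goods_def by blast
  qed
  have "s / WW \<phi> k = (sin (t - psi \<phi> k) / sin (2*t)) * (s * sin (t + psi \<phi> k))"
    unfolding fform by simp
  also have "\<dots> < (sin (t - psi \<phi> k) / sin (2*t)) * (2 * r * sin t * sin (2*t))"
    using sA[OF fr] s2t[OF fr] c1 by (intro mult_strict_left_mono) auto
  also have "\<dots> = hh \<phi> k - lev \<phi> (vert (k+1))" unfolding d1 using s2t[OF fr] by simp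
  finally show "s / WW \<phi> k < hh \<phi> k - lev \<phi> (vert (k+1))" .
  have "s / WW \<phi> k = (sin (t + psi \<phi> k) / sin (2*t)) * (s * sin (t - psi \<phi> k))"
    unfolding fform by simp
  also have "\<dots> < (sin (t + psi \<phi> k) / sin (2*t)) * (2 * r * sin t * sin (2*t))"
    using sB[OF fr] s2t[OF fr] c2 by (intro mult_strict_left_mono) auto
  also have "\<dots> = hh \<phi> k - lev \<phi> (vert (k-1))" unfolding d2 using s2t[OF fr] by simp
  finally show "s / WW \<phi> k < hh \<phi> k - lev \<phi> (vert (k-1))" .
qed

lemma hh_pos: "0 < hh \<phi> k"
proof -
  have "cos (psi \<phi> k) > 0" using fr t_le pi_gt3 by (intro cos_gt_zero_pi) auto
  then show ?thesis using rpos by (simp add: hh_def)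
qed

lemma maxa_nonneg: assumes "4 \<le> n" shows "0 \<le> max (lev \<phi> (vert (k+1))) (lev \<phi> (vert (k-1)))"
proof -
  have t4: "t \<le> pi / 4" using assms n_pos unfolding t_def by (simp add: field_simps)
  show ?thesis
  proof (cases "0 \<le> psi \<phi> k")
    case True
    have "0 \<le> cos (2*t - psi \<phi> k)" using True fr t4 by (intro cos_ge_zero) auto
    then show ?thesis unfolding lev_vk1[OF fr] using rpos by (simp add: le_max_iff_disj)
  next
    case False
    have "0 \<le> cos (2*t + psi \<phi> k)" using False fr t4 by (intro cos_ge_zero) auto
    then show ?thesis unfolding lev_vkm[OF fr] using rpos by (simp add: le_max_iff_disj)
  qed
qed

end
end


context poly begin

lemma n3_case:
  assumes n: "n = 3" and fr1: "\<bar>psi \<phi> k\<bar> < t" and fr2: "\<bar>psi (\<phi> + pi) k'\<bar> < t"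
  shows "max (lev \<phi> (vert (k+1))) (lev \<phi> (vert (k-1))) = min (lev \<phi> (vert (k'+1))) (lev \<phi> (vert (k'-1)))"
proof -
  have per: "vert (j + 3 * m) = vert j" for j m using vert_period[of j m] n by simp
  define d where "d = (k' - k) mod 3"
  define m where "m = (k' - k) div 3"
  have kd: "k' = k + d + 3 * m" by (simp add: d_def m_def)
  have d: "d = 0 \<or> d = 1 \<or> d = 2" unfolding d_def by presburger
  have lk: "lev \<phi> (vert k) = hh \<phi> k" using lev_vk[OF fr1] .
  have lk': "lev \<phi> (vert k') = - hh (\<phi>+pi) k'" using lev_vk'[OF fr1 fr2 order_refl] .
  have bot: "- hh (\<phi>+pi) k' \<le> lev \<phi> (vert j)" for j using botK[OF fr1 fr2 order_refl vert_in_K] .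
  have g1: "lev \<phi> (vert (k+1)) < hh \<phi> k" "lev \<phi> (vert (k-1)) < hh \<phi> k" using gap1[OF fr1] gap2[OF fr1] by auto
  have hp: "0 < hh \<phi> k" "0 < hh (\<phi>+pi) k'" using hh_pos[OF fr1] hh_pos[OF fr2] by auto
  consider "d = 0" | "d = 1" | "d = 2" using d by blast
  then show ?thesis
  proof cases
    case 1
    then have "vert k' = vert k" using per[of k m] kd by simp
    then show ?thesis using lk lk' hp by simp
  next
    case 2
    have e1: "vert (k'+1) = vert (k-1)" using per[of "k-1" "m+1"] kd 2 by (simp add: algebra_simps)
    have e2: "vert (k'-1) = vert k" using per[of "k" "m"] kd 2 by (simp add: algebra_simps)
    have e3: "vert (k+1) = vert k'" using per[of "k+1" "m"] kd 2 by (simp add: algebra_simps)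
    show ?thesis unfolding e1 e2 e3 lk lk' using bot[of "k-1"] g1 by simp
  next
    case 3
    have e1: "vert (k'+1) = vert k" using per[of "k" "m+1"] kd 3 by (simp add: algebra_simps)
    have e2: "vert (k'-1) = vert (k+1)" using per[of "k+1" "m"] kd 3 by (simp add: algebra_simps)
    have e3: "vert (k-1) = vert k'" using per[of "k-1" "m+1"] kd 3 by (simp add: algebra_simps)
    show ?thesis unfolding e1 e2 e3 lk lk' using bot[of "k+1"] g1 by simp
  qed
qed

definition "SC s \<longleftrightarrow> (4 \<le> n \<and> goods s) \<or> (n = 3 \<and> goodc s)"

lemma Qmeas:
  assumes fr1: "\<bar>psi \<phi> k\<bar> < t" and fr2: "\<bar>psi (\<phi> + pi) k'\<bar> < t" and s0: "0 \<le> s" and sc: "SC s"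
  shows "Qs s \<phi> = {- hh (\<phi>+pi) k' .. - hh (\<phi>+pi) k' + s / WW (\<phi>+pi) k'} \<union> {hh \<phi> k - s / WW \<phi> k .. hh \<phi> k}"
    "- hh (\<phi>+pi) k' + s / WW (\<phi>+pi) k' \<le> hh \<phi> k - s / WW \<phi> k"
proof -
  have gc: "goodc s" using sc goods_goodc by (auto simp: SC_def)
  have lv: "lev \<phi> x = - lev (\<phi>+pi) x" for x using lev_neg .
  have Ha: "s / WW \<phi> k \<le> hh \<phi> k - lev \<phi> (vert (k+1))" "s / WW \<phi> k \<le> hh \<phi> k - lev \<phi> (vert (k-1))"
    using H1[OF fr1 gc] by auto
  have Hb: "s / WW (\<phi>+pi) k' \<le> hh (\<phi>+pi) k' + lev \<phi> (vert (k'+1))"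
     "s / WW (\<phi>+pi) k' \<le> hh (\<phi>+pi) k' + lev \<phi> (vert (k'-1))"
    using H1[OF fr2 gc] lv by auto
  have H34: "min (lev \<phi> (vert (k'+1))) (lev \<phi> (vert (k'-1))) \<le> max (lev \<phi> (vert (k+1))) (lev \<phi> (vert (k-1))) \<and>
     (max (lev \<phi> (vert (k+1))) (lev \<phi> (vert (k-1))) = min (lev \<phi> (vert (k'+1))) (lev \<phi> (vert (k'-1))) \<or>
       (s / WW \<phi> k < hh \<phi> k - lev \<phi> (vert (k+1)) \<and> s / WW \<phi> k < hh \<phi> k - lev \<phi> (vert (k-1)) \<and>
        s / WW (\<phi>+pi) k' < hh (\<phi>+pi) k' + lev \<phi> (vert (k'+1)) \<and> s / WW (\<phi>+pi) k' < hh (\<phi>+pi) k' + lev \<phi> (vert (k'-1))))"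
  proof (cases "n = 3")
    case True
    then show ?thesis using n3_case[OF True fr1 fr2] by simp
  next
    case False
    then have n4: "4 \<le> n" and gs: "goods s" using sc n3 by (auto simp: SC_def)
    have "0 \<le> max (lev \<phi> (vert (k+1))) (lev \<phi> (vert (k-1)))" using maxa_nonneg[OF fr1 n4] .
    moreover have "0 \<le> max (lev (\<phi>+pi) (vert (k'+1))) (lev (\<phi>+pi) (vert (k'-1)))" using maxa_nonneg[OF fr2 n4] .
    moreover note H1s[OF fr1 gs] H1s[OF fr2 gs]
    ultimately show ?thesis using lv[of "vert (k'+1)"] lv[of "vert (k'-1)"] by auto
  qed
  show "Qs s \<phi> = {- hh (\<phi>+pi) k' .. - hh (\<phi>+pi) k' + s / WW (\<phi>+pi) k'} \<union> {hh \<phi> k - s / WW \<phi> k .. hh \<phi> k}"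
    "- hh (\<phi>+pi) k' + s / WW (\<phi>+pi) k' \<le> hh \<phi> k - s / WW \<phi> k"
    using Qchar[OF fr1 fr2 s0 Ha Hb] H34 by auto
qed

lemma Qmeas2:
  assumes fr1: "\<bar>psi \<phi> k\<bar> < t" and fr2: "\<bar>psi (\<phi> + pi) k'\<bar> < t" and s0: "0 \<le> s" and sc: "SC s"
  shows "Qs s \<phi> \<in> sets lborel" "emeasure lborel (Qs s \<phi>) = ennreal (s / WW \<phi> k + s / WW (\<phi>+pi) k')"
proof -
  define A where "A = - hh (\<phi>+pi) k'"
  define B where "B = s / WW (\<phi>+pi) k'"
  define C where "C = hh \<phi> k - s / WW \<phi> k"
  define D where "D = s / WW \<phi> k"
  have B0: "0 \<le> B" "0 \<le> D" using s0 WW_pos[OF fr1] WW_pos[OF fr2] by (auto simp: B_def D_def)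
  have Q: "Qs s \<phi> = {A .. A + B} \<union> {C .. C + D}" and ord: "A + B \<le> C"
    using Qmeas[OF fr1 fr2 s0 sc] by (simp_all add: A_def B_def C_def D_def)
  show "Qs s \<phi> \<in> sets lborel" unfolding Q by simp
  have "{A .. A + B} \<union> {C .. C + D} = ({A .. A + B} \<union> {C <.. C + D}) \<union> {C}" using B0 by auto
  moreover have "emeasure lborel (({A .. A + B} \<union> {C <.. C + D}) \<union> {C}) = emeasure lborel ({A .. A + B} \<union> {C <.. C + D})"
    by (rule emeasure_Un_null_set) auto
  ultimately have "emeasure lborel (Qs s \<phi>) = emeasure lborel ({A .. A + B} \<union> {C <.. C + D})"
    unfolding Q by simp
  also have "\<dots> = emeasure lborel {A .. A + B} + emeasure lborel {C <.. C + D}"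
    using ord by (intro plus_emeasure[symmetric]) auto
  also have "\<dots> = ennreal (B + D)" using B0 by (simp add: ennreal_plus)
  finally show "emeasure lborel (Qs s \<phi>) = ennreal (s / WW \<phi> k + s / WW (\<phi>+pi) k')"
    by (simp add: B_def D_def add.commute)
qed

end


context poly begin

definition "Q2 s = {(p, \<phi>). gline p \<phi> \<inter> K \<noteq> {} \<and> chord_length K p \<phi> \<le> s}"

lemma cont_lev: "continuous_on UNIV (\<lambda>z::(real\<times>real)\<times>(real\<times>real). lev (snd (snd z)) (fst z))"
  unfolding lev_def by (intro continuous_intros)
lemma cont_lev1: "continuous_on UNIV (\<lambda>z::((real\<times>real)\<times>(real\<times>real))\<times>(real\<times>real). lev (snd (snd z)) (fst (fst z)))"
  unfolding lev_def by (intro continuous_intros)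
lemma cont_lev2: "continuous_on UNIV (\<lambda>z::((real\<times>real)\<times>(real\<times>real))\<times>(real\<times>real). lev (snd (snd z)) (snd (fst z)))"
  unfolding lev_def by (intro continuous_intros)

lemma closed_M: "closed {y::real\<times>real. \<exists>x. x \<in> K \<and> lev (snd y) x = fst y}"
proof -
  have "closed {y. \<exists>x. x \<in> K \<and> (x, y) \<in> {z. lev (snd (snd z)) (fst z) = fst (snd z)}}"
    by (intro closed_compact_projection compact_K closed_Collect_eq cont_lev continuous_intros)
  then show ?thesis by simp
qed

lemma closed_C: "closed {y::real\<times>real. \<exists>x. x \<in> K \<times> K \<and> lev (snd y) (fst x) = fst y \<and> lev (snd y) (snd x) = fst y \<and> e \<le> dist (fst x) (snd x)}"
proof -
  have "closed {y. \<exists>x. x \<in> K \<times> K \<and> (x, y) \<in> {z. lev (snd (snd z)) (fst (fst z)) = fst (snd z)} \<inter>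
          {z. lev (snd (snd z)) (snd (fst z)) = fst (snd z)} \<inter> {z. e \<le> dist (fst (fst z)) (snd (fst z))}}"
    by (intro closed_compact_projection compact_Times compact_K closed_Int closed_Collect_eq closed_Collect_le
        cont_lev1 cont_lev2 continuous_intros)
  then show ?thesis by simp
qed

lemma Q2_eq:
  assumes s0: "0 \<le> s"
  shows "Q2 s = {y::real\<times>real. \<exists>x. x \<in> K \<and> lev (snd y) x = fst y} \<inter>
    (\<Inter>m::nat. - {y::real\<times>real. \<exists>x. x \<in> K \<times> K \<and> lev (snd y) (fst x) = fst y \<and> lev (snd y) (snd x) = fst y \<and> s + 1 / Suc m \<le> dist (fst x) (snd x)})"
proof (intro set_eqI)
  fix y :: "real \<times> real"
  obtain p \<phi> where y: "y = (p, \<phi>)" by fastforce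
  have bnd: "bounded (gline p \<phi> \<inter> K)" by (meson bounded_K bounded_subset inf_le2)
  have A: "gline p \<phi> \<inter> K \<noteq> {} \<longleftrightarrow> (\<exists>x. x \<in> K \<and> lev \<phi> x = p)" by (auto simp: gline_lev)
  have B: "chord_length K p \<phi> \<le> s \<longleftrightarrow> (\<forall>m::nat. \<not> (\<exists>x. x \<in> K \<times> K \<and> lev \<phi> (fst x) = p \<and> lev \<phi> (snd x) = p \<and> s + 1 / Suc m \<le> dist (fst x) (snd x)))"
  proof
    assume c: "chord_length K p \<phi> \<le> s"
    show "\<forall>m::nat. \<not> (\<exists>x. x \<in> K \<times> K \<and> lev \<phi> (fst x) = p \<and> lev \<phi> (snd x) = p \<and> s + 1 / Suc m \<le> dist (fst x) (snd x))"
    proof (intro allI notI)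
      fix m :: nat
      assume "\<exists>x. x \<in> K \<times> K \<and> lev \<phi> (fst x) = p \<and> lev \<phi> (snd x) = p \<and> s + 1 / Suc m \<le> dist (fst x) (snd x)"
      then obtain a b where ab: "a \<in> K" "b \<in> K" "lev \<phi> a = p" "lev \<phi> b = p" "s + 1 / Suc m \<le> dist a b" by auto
      have "dist a b \<le> chord_length K p \<phi>" unfolding chord_length_def
        using ab by (intro diameter_bounded_bound[OF bnd]) (auto simp: gline_lev)
      moreover have "0 < 1 / real (Suc m)" by simp
      ultimately show False using c ab(5) by linarith
    qed
  next
    assume H: "\<forall>m::nat. \<not> (\<exists>x. x \<in> K \<times> K \<and> lev \<phi> (fst x) = p \<and> lev \<phi> (snd x) = p \<and> s + 1 / Suc m \<le> dist (fst x) (snd x))"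
    show "chord_length K p \<phi> \<le> s" unfolding chord_length_def
    proof (rule diameter_le)
      show "gline p \<phi> \<inter> K \<noteq> {} \<or> 0 \<le> s" using s0 by simp
      fix a b assume ab: "a \<in> gline p \<phi> \<inter> K" "b \<in> gline p \<phi> \<inter> K"
      show "norm (a - b) \<le> s"
      proof (rule ccontr)
        assume "\<not> norm (a - b) \<le> s"
        then have "0 < dist a b - s" by (simp add: dist_norm)
        then obtain m where m: "inverse (real (Suc m)) < dist a b - s" using reals_Archimedean by blast
        have "s + 1 / Suc m \<le> dist a b" using m by (simp add: field_simps)
        then have "\<exists>x. x \<in> K \<times> K \<and> lev \<phi> (fst x) = p \<and> lev \<phi> (snd x) = p \<and> s + 1 / Suc m \<le> dist (fst x) (snd x)"
          using ab by (intro exI[of _ "(a,b)"]) (auto simp: gline_lev)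
        then show False using H by blast
      qed
    qed
  qed
  show "y \<in> Q2 s \<longleftrightarrow> y \<in> {y::real\<times>real. \<exists>x. x \<in> K \<and> lev (snd y) x = fst y} \<inter>
    (\<Inter>m::nat. - {y::real\<times>real. \<exists>x. x \<in> K \<times> K \<and> lev (snd y) (fst x) = fst y \<and> lev (snd y) (snd x) = fst y \<and> s + 1 / Suc m \<le> dist (fst x) (snd x)})"
    unfolding y Q2_def using A B by simp
qed

lemma Q2_borel: assumes "0 \<le> s" shows "Q2 s \<in> sets borel"
proof -
  have "\<And>m::nat. - {y::real\<times>real. \<exists>x. x \<in> K \<times> K \<and> lev (snd y) (fst x) = fst y \<and> lev (snd y) (snd x) = fst y \<and> s + 1 / Suc m \<le> dist (fst x) (snd x)} \<in> sets borel"
    by (intro borel_comp borel_closed closed_C)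
  then show ?thesis unfolding Q2_eq[OF assms]
    by (intro sets.Int borel_closed closed_M sets.countable_INT') auto
qed

end


lemma shift_int:
  fixes g :: "real \<Rightarrow> ennreal"
  assumes g[measurable]: "g \<in> borel_measurable borel" and per: "\<And>x. g (x + P) = g x" and c: "0 \<le> c" "c \<le> P"
  shows "(\<integral>\<^sup>+x. indicator {0..<P} x * g (x + c) \<partial>lborel) = (\<integral>\<^sup>+x. indicator {0..<P} x * g x \<partial>lborel)"
proof -
  have "(\<integral>\<^sup>+y. indicator {c..<P+c} y * g y \<partial>lborel) = (\<integral>\<^sup>+x. indicator {c..<P+c} (c + x) * g (c + x) \<partial>lborel)"
    using nn_integral_real_affine[of "\<lambda>y. indicator {c..<P+c} y * g y" 1 c] by simp
  also have "\<dots> = (\<integral>\<^sup>+x. indicator {0..<P} x * g (x + c) \<partial>lborel)"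
    by (intro nn_integral_cong) (auto simp: indicator_def add.commute)
  finally have e1: "(\<integral>\<^sup>+x. indicator {0..<P} x * g (x + c) \<partial>lborel) = (\<integral>\<^sup>+y. indicator {c..<P+c} y * g y \<partial>lborel)" ..
  have "(\<integral>\<^sup>+y. indicator {P..<P+c} y * g y \<partial>lborel) = (\<integral>\<^sup>+x. indicator {P..<P+c} (P + x) * g (P + x) \<partial>lborel)"
    using nn_integral_real_affine[of "\<lambda>y. indicator {P..<P+c} y * g y" 1 P] by simp
  also have "\<dots> = (\<integral>\<^sup>+x. indicator {0..<c} x * g x \<partial>lborel)"
    using per by (intro nn_integral_cong) (auto simp: indicator_def add.commute)
  finally have e2: "(\<integral>\<^sup>+y. indicator {P..<P+c} y * g y \<partial>lborel) = (\<integral>\<^sup>+x. indicator {0..<c} x * g x \<partial>lborel)" .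
  have "(\<integral>\<^sup>+y. indicator {c..<P+c} y * g y \<partial>lborel) =
     (\<integral>\<^sup>+y. indicator {c..<P} y * g y + indicator {P..<P+c} y * g y \<partial>lborel)"
    using c by (intro nn_integral_cong) (auto simp: indicator_def)
  also have "\<dots> = (\<integral>\<^sup>+y. indicator {c..<P} y * g y \<partial>lborel) + (\<integral>\<^sup>+y. indicator {P..<P+c} y * g y \<partial>lborel)"
    by (intro nn_integral_add) auto
  also have "\<dots> = (\<integral>\<^sup>+y. indicator {c..<P} y * g y \<partial>lborel) + (\<integral>\<^sup>+y. indicator {0..<c} y * g y \<partial>lborel)"
    using e2 by simp
  also have "\<dots> = (\<integral>\<^sup>+y. indicator {c..<P} y * g y + indicator {0..<c} y * g y \<partial>lborel)"
    by (intro nn_integral_add[symmetric]) auto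
  also have "\<dots> = (\<integral>\<^sup>+y. indicator {0..<P} y * g y \<partial>lborel)"
    using c by (intro nn_integral_cong) (auto simp: indicator_def)
  finally show ?thesis using e1 by simp
qed

context poly begin

definition kf :: "real \<Rightarrow> int" where "kf \<phi> = \<lfloor>\<phi> / (2*t) + 1/2\<rfloor>"
definition "ps \<phi> = psi \<phi> (kf \<phi>)"

lemma ps_bounds: "- t \<le> ps \<phi>" "ps \<phi> < t"
proof -
  have a: "of_int (kf \<phi>) \<le> \<phi> / (2*t) + 1/2" "\<phi> / (2*t) + 1/2 < of_int (kf \<phi>) + 1"
    unfolding kf_def by linarith+
  have t0: "0 < 2*t" using t_pos by simp
  from a(1) have "2*t * of_int (kf \<phi>) \<le> \<phi> + t" using t0 by (simp add: field_simps)
  then show "- t \<le> ps \<phi>" by (simp add: ps_def psi_def)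
  from a(2) have "\<phi> + t < 2*t * (of_int (kf \<phi>) + 1)" using t0 by (simp add: field_simps)
  then show "ps \<phi> < t" by (simp add: ps_def psi_def algebra_simps)
qed

lemma kf_shift: "kf (\<phi> + 2*t* of_int m) = kf \<phi> + m"
proof -
  have "(\<phi> + 2*t* of_int m) / (2*t) + 1/2 = (\<phi> / (2*t) + 1/2) + of_int m" using t_pos by (simp add: field_simps)
  then show ?thesis unfolding kf_def by (simp only: floor_add_int)
qed

lemma ps_shift: "ps (\<phi> + 2*t* of_int m) = ps \<phi>"
  unfolding ps_def psi_def kf_shift by (simp add: algebra_simps)

lemma ps_2pi: "ps (\<phi> + 2*pi) = ps \<phi>"
proof -
  have "\<phi> + 2*pi = \<phi> + 2*t* of_int (int n)" using nt by (simp add: algebra_simps)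
  then show ?thesis using ps_shift[of \<phi> "int n"] by (simp only:)
qed

lemma ps_small: "- t \<le> x \<Longrightarrow> x < t \<Longrightarrow> ps x = x"
proof -
  assume x: "- t \<le> x" "x < t"
  have "0 \<le> x / (2*t) + 1/2" "x / (2*t) + 1/2 < 1" using x t_pos by (auto simp: field_simps)
  then have "kf x = 0" unfolding kf_def by linarith
  then show "ps x = x" by (simp add: ps_def psi_def)
qed

lemma meas_ps[measurable]: "ps \<in> borel_measurable borel"
  unfolding ps_def psi_def kf_def by measurable

definition "Fr s \<phi> = s * sin (t - ps \<phi>) * sin (t + ps \<phi>) / sin (2*t)"

lemma meas_Fr[measurable]: "Fr s \<in> borel_measurable borel"
  unfolding Fr_def by measurable

lemma Fr_nonneg: assumes "0 \<le> s" shows "0 \<le> Fr s \<phi>"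
proof -
  have "0 \<le> sin (t - ps \<phi>)" "0 \<le> sin (t + ps \<phi>)" "0 < sin (2*t)"
    using ps_bounds[of \<phi>] t_pos t_le pi_gt3 by (auto intro!: sin_ge_zero sin_gt_zero)
  then show ?thesis using assms by (simp add: Fr_def)
qed

lemma Fr_shift: "Fr s (\<phi> + 2*t* of_int m) = Fr s \<phi>" by (simp add: Fr_def ps_shift)
lemma Fr_2pi: "Fr s (\<phi> + 2*pi) = Fr s \<phi>" by (simp add: Fr_def ps_2pi)

lemma Fr_eq: "Fr s \<phi> = s / WW \<phi> (kf \<phi>)"
  by (simp add: Fr_def WW_def ps_def)

end


lemma ind_split: "a \<le> b \<Longrightarrow> b \<le> c \<Longrightarrow> indicator {a..<c} (x::real) * (y::ennreal) = indicator {a..<b} x * y + indicator {b..<c} x * y"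
  by (auto simp: indicator_def)

context poly begin

lemma Fr_pieces:
  "(\<integral>\<^sup>+x. indicator {-t..<2*t*real m - t} x * ennreal (Fr s x) \<partial>lborel) =
     of_nat m * (\<integral>\<^sup>+x. indicator {-t..<t} x * ennreal (Fr s x) \<partial>lborel)"
proof (induction m)
  case 0
  then show ?case by simp
next
  case (Suc m)
  have piece: "(\<integral>\<^sup>+x. indicator {2*t*real m - t..<2*t*real m + t} x * ennreal (Fr s x) \<partial>lborel) =
       (\<integral>\<^sup>+x. indicator {-t..<t} x * ennreal (Fr s x) \<partial>lborel)"
  proof -
    have "(\<integral>\<^sup>+x. indicator {2*t*real m - t..<2*t*real m + t} x * ennreal (Fr s x) \<partial>lborel) =
       (\<integral>\<^sup>+x. indicator {2*t*real m - t..<2*t*real m + t} (2*t*real m + x) * ennreal (Fr s (2*t*real m + x)) \<partial>lborel)"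
      using nn_integral_real_affine[of "\<lambda>x. indicator {2*t*real m - t..<2*t*real m + t} x * ennreal (Fr s x)" 1 "2*t*real m"]
      by simp
    also have "\<dots> = (\<integral>\<^sup>+x. indicator {-t..<t} x * ennreal (Fr s x) \<partial>lborel)"
    proof (intro nn_integral_cong)
      fix x
      have "Fr s (2*t*real m + x) = Fr s x" using Fr_shift[of s x "int m"] by (simp add: add.commute)
      then show "indicator {2*t*real m - t..<2*t*real m + t} (2*t*real m + x) * ennreal (Fr s (2*t*real m + x)) =
          indicator {-t..<t} x * ennreal (Fr s x)" by (simp add: indicator_def)
    qed
    finally show ?thesis .
  qed
  have "(\<integral>\<^sup>+x. indicator {-t..<2*t*real (Suc m) - t} x * ennreal (Fr s x) \<partial>lborel) =
     (\<integral>\<^sup>+x. indicator {-t..<2*t*real m - t} x * ennreal (Fr s x) +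
        indicator {2*t*real m - t..<2*t*real m + t} x * ennreal (Fr s x) \<partial>lborel)"
  proof (intro nn_integral_cong)
    fix x
    have e: "2*t*real (Suc m) - t = 2*t*real m + t" by (simp add: algebra_simps)
    have "0 \<le> 2*t*real m" using t_pos by simp
    then show "indicator {-t..<2*t*real (Suc m) - t} x * ennreal (Fr s x) =
     indicator {-t..<2*t*real m - t} x * ennreal (Fr s x) +
        indicator {2*t*real m - t..<2*t*real m + t} x * ennreal (Fr s x)"
      unfolding e using t_pos by (intro ind_split) auto
  qed
  also have "\<dots> = (\<integral>\<^sup>+x. indicator {-t..<2*t*real m - t} x * ennreal (Fr s x) \<partial>lborel) +
      (\<integral>\<^sup>+x. indicator {2*t*real m - t..<2*t*real m + t} x * ennreal (Fr s x) \<partial>lborel)"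
    by (intro nn_integral_add) auto
  also have "\<dots> = of_nat (Suc m) * (\<integral>\<^sup>+x. indicator {-t..<t} x * ennreal (Fr s x) \<partial>lborel)"
    unfolding Suc.IH piece by (simp add: algebra_simps)
  finally show ?case .
qed

lemma Fr_window:
  "(\<integral>\<^sup>+x. indicator {0..<2*pi} x * ennreal (Fr s x) \<partial>lborel) =
   (\<integral>\<^sup>+x. indicator {-t..<2*pi - t} x * ennreal (Fr s x) \<partial>lborel)"
proof -
  have "(\<integral>\<^sup>+x. indicator {-t..<2*pi - t} x * ennreal (Fr s x) \<partial>lborel) =
     (\<integral>\<^sup>+x. indicator {-t..<2*pi - t} (-t + x) * ennreal (Fr s (-t + x)) \<partial>lborel)"
    using nn_integral_real_affine[of "\<lambda>x. indicator {-t..<2*pi - t} x * ennreal (Fr s x)" 1 "-t"]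
    by simp
  also have "\<dots> = (\<integral>\<^sup>+x. indicator {0..<2*pi} x * ennreal (Fr s (x + (2*pi - t))) \<partial>lborel)"
  proof (intro nn_integral_cong)
    fix x
    have "Fr s (x + (2*pi - t)) = Fr s (-t + x)" using Fr_2pi[of s "-t + x"] by (simp add: algebra_simps)
    then show "indicator {-t..<2*pi - t} (-t + x) * ennreal (Fr s (-t + x)) =
        indicator {0..<2*pi} x * ennreal (Fr s (x + (2*pi - t)))" by (simp add: indicator_def)
  qed
  also have "\<dots> = (\<integral>\<^sup>+x. indicator {0..<2*pi} x * ennreal (Fr s x) \<partial>lborel)"
    using t_pos t_le pi_gt3 Fr_2pi by (intro shift_int) auto
  finally show ?thesis ..
qed

lemma sinsin: "sin (a - x) * sin (a + x) = (cos (2*x) - cos (2*a)) / (2::real)"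
proof -
  have "sin (a - x) * sin (a + x) = (sin a)^2 * (cos x)^2 - (cos a)^2 * (sin x)^2"
    unfolding sin_add sin_diff power2_eq_square by algebra
  also have "\<dots> = (sin a)^2 - (sin x)^2" by (simp add: cos_squared_eq algebra_simps)
  also have "\<dots> = (cos (2*x) - cos (2*a)) / 2" by (simp add: cos_double_sin)
  finally show ?thesis .
qed

definition "Iv s = s * (sin (2*t) - 2*t*cos (2*t)) / (2 * sin (2*t))"

lemma Fr_base: assumes s0: "0 \<le> s"
  shows "(\<integral>\<^sup>+x. indicator {-t..<t} x * ennreal (Fr s x) \<partial>lborel) = ennreal (Iv s)"
proof -
  define G where "G x = s * sin (t - x) * sin (t + x) / sin (2*t)" for x
  define H where "H x = s / sin (2*t) * (sin (2*x) / 4 - x * cos (2*t) / 2)" for x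
  have s2: "0 < sin (2*t)" using t_pos t_le pi_gt3 by (intro sin_gt_zero) auto
  have "(\<integral>\<^sup>+x. indicator {-t..<t} x * ennreal (Fr s x) \<partial>lborel) = (\<integral>\<^sup>+x. ennreal (G x) * indicator {-t..t} x \<partial>lborel)"
  proof (rule nn_integral_cong_AE)
    have "AE x in lborel. x \<noteq> t" by (rule AE_lborel_singleton)
    then show "AE x in lborel. indicator {-t..<t} x * ennreal (Fr s x) = ennreal (G x) * indicator {-t..t} x"
      by eventually_elim (auto simp: indicator_def Fr_def G_def ps_small)
  qed
  also have "\<dots> = H t - H (- t)"
  proof (rule nn_integral_FTC_Icc)
    show "G \<in> borel_measurable borel" unfolding G_def by measurable
    fix x assume x: "x \<in> {-t..t}"
    have "(H has_real_derivative s / sin (2*t) * (cos (2*x) * 2 / 4 - cos (2*t) / 2)) (at x)"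
      unfolding H_def using s2 by (auto intro!: derivative_eq_intros)
    moreover have "s / sin (2*t) * (cos (2*x) * 2 / 4 - cos (2*t) / 2) = G x"
    proof -
      have "G x = s * ((cos (2*x) - cos (2*t)) / 2) / sin (2*t)"
        unfolding G_def sinsin[of t x, symmetric] by (simp add: mult.assoc)
      then show ?thesis by (cases "sin (2*t) = 0") (simp_all add: field_simps)
    qed
    ultimately show "(H has_real_derivative G x) (at x)" by simp
    have "0 \<le> sin (t - x)" "0 \<le> sin (t + x)" using x t_pos t_le pi_gt3 by (auto intro!: sin_ge_zero)
    then show "0 \<le> G x" using s0 s2 by (simp add: G_def)
  qed (use t_pos in auto)
  also have "H t - H (-t) = Iv s"
  proof -
    have s2': "sin (2*t) \<noteq> 0" using s2 by simp
    have "H t - H (-t) = s / sin (2*t) * (sin (2*t) / 2 - t * cos (2*t))"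
      unfolding H_def by (simp add: algebra_simps)
    also have "\<dots> = Iv s" unfolding Iv_def using s2' by (simp add: field_simps)
    finally show ?thesis .
  qed
  finally show ?thesis .
qed

lemma Fr_total: assumes s0: "0 \<le> s"
  shows "(\<integral>\<^sup>+x. indicator {0..<2*pi} x * ennreal (Fr s x) \<partial>lborel) = ennreal (real n * Iv s)"
proof -
  have e: "2*pi - t = 2*t*real n - t" using nt by (simp add: algebra_simps)
  have "(\<integral>\<^sup>+x. indicator {0..<2*pi} x * ennreal (Fr s x) \<partial>lborel) =
     (\<integral>\<^sup>+x. indicator {-t..<2*pi - t} x * ennreal (Fr s x) \<partial>lborel)" by (rule Fr_window)
  also have "\<dots> = (\<integral>\<^sup>+x. indicator {-t..<2*t*real n - t} x * ennreal (Fr s x) \<partial>lborel)" unfolding e ..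
  also have "\<dots> = of_nat n * ennreal (Iv s)" unfolding Fr_pieces Fr_base[OF s0] ..
  finally have "(\<integral>\<^sup>+x. indicator {0..<2*pi} x * ennreal (Fr s x) \<partial>lborel) = of_nat n * ennreal (Iv s)" .
  also have "\<dots> = ennreal (real n * Iv s)" by (simp add: ennreal_mult' ennreal_of_nat_eq_real_of_nat)
  finally show ?thesis .
qed

end


context poly begin

lemma Iv_nonneg: assumes s0: "0 \<le> s" shows "0 \<le> Iv s"
proof -
  define G where "G x = s * sin (t - x) * sin (t + x) / sin (2*t)" for x
  define H where "H x = s / sin (2*t) * (sin (2*x) / 4 - x * cos (2*t) / 2)" for x
  have s2: "0 < sin (2*t)" using t_pos t_le pi_gt3 by (intro sin_gt_zero) auto
  have deriv: "\<exists>y. DERIV H x :> y \<and> 0 \<le> y" if x: "- t \<le> x" "x \<le> t" for x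
  proof -
    have "(H has_real_derivative s / sin (2*t) * (cos (2*x) * 2 / 4 - cos (2*t) / 2)) (at x)"
      unfolding H_def using s2 by (auto intro!: derivative_eq_intros)
    moreover have "s / sin (2*t) * (cos (2*x) * 2 / 4 - cos (2*t) / 2) = G x"
    proof -
      have "G x = s * ((cos (2*x) - cos (2*t)) / 2) / sin (2*t)"
        unfolding G_def sinsin[of t x, symmetric] by (simp add: mult.assoc)
      then show ?thesis by (cases "sin (2*t) = 0") (simp_all add: field_simps)
    qed
    moreover have "0 \<le> G x"
    proof -
      have "0 \<le> sin (t - x)" "0 \<le> sin (t + x)" using x t_pos t_le pi_gt3 by (auto intro!: sin_ge_zero)
      then show ?thesis using s0 s2 by (simp add: G_def)
    qed
    ultimately show "\<exists>y. DERIV H x :> y \<and> 0 \<le> y" by auto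
  qed
  have "- t \<le> t" using t_pos by simp
  note DERIV_nonneg_imp_nondecreasing[of "-t" t H, OF this deriv]
  moreover have "H t - H (-t) = Iv s"
  proof -
    have s2': "sin (2*t) \<noteq> 0" using s2 by simp
    have "H t - H (-t) = s / sin (2*t) * (sin (2*t) / 2 - t * cos (2*t))"
      unfolding H_def by (simp add: algebra_simps)
    also have "\<dots> = Iv s" unfolding Iv_def using s2' by (simp add: field_simps)
    finally show ?thesis .
  qed
  ultimately show ?thesis by simp
qed

definition "mm s \<phi> = emeasure lborel (Qs s \<phi> \<inter> {0..})"

lemma Qs_2pi: "Qs s (\<phi> + 2*pi) = Qs s \<phi>"
  by (simp add: Qs_def chord_length_def gline_2pi)

lemma Qs_pi: "Qs s (\<phi> + pi) = uminus -` Qs s \<phi>"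
  by (auto simp: Qs_def chord_length_def gline_pi)

lemma mm_2pi: "mm s (\<phi> + 2*pi) = mm s \<phi>" by (simp add: mm_def Qs_2pi)

lemma mm_meas: assumes "0 \<le> s" shows "mm s \<in> borel_measurable borel"
proof -
  have c: "({0..} \<times> UNIV :: (real \<times> real) set) \<in> sets borel" by (intro borel_closed closed_Times) auto
  have A: "Q2 s \<inter> ({0..} \<times> UNIV) \<in> sets (lborel \<Otimes>\<^sub>M lborel)"
    unfolding lborel_prod sets_lborel by (rule sets.Int[OF Q2_borel[OF assms] c])
  have "(\<lambda>\<phi>. emeasure lborel ((\<lambda>x. (x, \<phi>)) -` (Q2 s \<inter> ({0..} \<times> UNIV)))) \<in> borel_measurable lborel"
    by (rule lborel_pair.measurable_emeasure_Pair2[OF A])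
  moreover have "(\<lambda>x. (x, \<phi>)) -` (Q2 s \<inter> ({0..} \<times> UNIV)) = Qs s \<phi> \<inter> {0..}" for \<phi>
    by (auto simp: Q2_def Qs_def)
  ultimately show ?thesis by (simp add: mm_def[abs_def])
qed

lemma refl_meas: assumes "A \<in> sets borel" shows "emeasure lborel (uminus -` A) = emeasure lborel (A :: real set)"
proof -
  have "emeasure lborel A = emeasure (distr lborel borel uminus) A" by (simp add: lborel_distr_uminus)
  also have "\<dots> = emeasure lborel (uminus -` A \<inter> space lborel)" using assms by (intro emeasure_distr) auto
  finally show ?thesis by simp
qed

end

context poly begin
lemma mm_generic:
  assumes s0: "0 \<le> s" and sc: "SC s" and g1: "ps \<phi> \<noteq> - t" and g2: "ps (\<phi> + pi) \<noteq> - t"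
  shows "mm s \<phi> + mm s (\<phi> + pi) = ennreal (Fr s \<phi> + Fr s (\<phi> + pi))"
proof -
  have fr1: "\<bar>psi \<phi> (kf \<phi>)\<bar> < t" using ps_bounds[of \<phi>] g1 unfolding ps_def by auto
  have fr2: "\<bar>psi (\<phi>+pi) (kf (\<phi>+pi))\<bar> < t" using ps_bounds[of "\<phi>+pi"] g2 unfolding ps_def by auto
  note Q = Qmeas2[OF fr1 fr2 s0 sc]
  have QB: "Qs s \<phi> \<in> sets borel" using Q(1) by simp
  have am: "{..0::real} \<in> sets borel" by simp
  have QB2: "Qs s \<phi> \<inter> {..0} \<in> sets borel" by (rule sets.Int[OF QB am])
  have se: "Qs s (\<phi> + pi) \<inter> {0..} = uminus -` (Qs s \<phi> \<inter> {..0})" by (auto simp: Qs_pi)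
  have "mm s (\<phi> + pi) = emeasure lborel (uminus -` (Qs s \<phi> \<inter> {..0}))"
    unfolding mm_def se ..
  also have "\<dots> = emeasure lborel (Qs s \<phi> \<inter> {..0})" by (rule refl_meas[OF QB2])
  also have "\<dots> = emeasure lborel (Qs s \<phi> \<inter> {..<0})"
  proof -
    have u: "Qs s \<phi> \<inter> {..0} = (Qs s \<phi> \<inter> {..<0}) \<union> (Qs s \<phi> \<inter> {0})" by auto
    have z: "{0::real} \<in> null_sets lborel" by (rule countable_imp_null_set_lborel) simp
    have zs: "Qs s \<phi> \<inter> {0} \<in> sets lborel" using QB by simp
    have n: "Qs s \<phi> \<inter> {0} \<in> null_sets lborel" by (rule null_sets_subset[OF z zs]) simp
    have lt: "Qs s \<phi> \<inter> {..<0} \<in> sets lborel" using QB by simp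
    show ?thesis unfolding u by (rule emeasure_Un_null_set[OF lt n])
  qed
  finally have e: "mm s (\<phi> + pi) = emeasure lborel (Qs s \<phi> \<inter> {..<0})" .
  have "mm s \<phi> + mm s (\<phi> + pi) = emeasure lborel (Qs s \<phi> \<inter> {0..} \<union> Qs s \<phi> \<inter> {..<0})"
  proof -
    have a: "Qs s \<phi> \<inter> {0..} \<in> sets lborel" using QB by simp
    have b: "Qs s \<phi> \<inter> {..<0} \<in> sets lborel" using QB by simp
    have c: "(Qs s \<phi> \<inter> {0..}) \<inter> (Qs s \<phi> \<inter> {..<0}) = {}" by auto
    show ?thesis unfolding e unfolding mm_def by (rule plus_emeasure[OF a b c])
  qed
  also have "Qs s \<phi> \<inter> {0..} \<union> Qs s \<phi> \<inter> {..<0} = Qs s \<phi>" by auto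
  finally show ?thesis using Q(2) by (simp add: Fr_eq)
qed

lemma AE_generic: "AE \<phi> in lborel. ps \<phi> \<noteq> - t \<and> ps (\<phi> + pi) \<noteq> - t"
proof -
  have sub: "{\<phi>. \<not> (ps \<phi> \<noteq> - t \<and> ps (\<phi> + pi) \<noteq> - t)} \<subseteq>
     range (\<lambda>j::int. (2 * of_int j - 1) * t) \<union> range (\<lambda>j::int. (2 * of_int j - 1) * t - pi)"
  proof
    fix \<phi> assume "\<phi> \<in> {\<phi>. \<not> (ps \<phi> \<noteq> - t \<and> ps (\<phi> + pi) \<noteq> - t)}"
    then consider "ps \<phi> = - t" | "ps (\<phi> + pi) = - t" by auto
    then show "\<phi> \<in> range (\<lambda>j::int. (2 * of_int j - 1) * t) \<union> range (\<lambda>j::int. (2 * of_int j - 1) * t - pi)"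
    proof cases
      case 1
      then have "\<phi> = (2 * of_int (kf \<phi>) - 1) * t" by (simp add: ps_def psi_def algebra_simps)
      then show ?thesis by blast
    next
      case 2
      then have "\<phi> = (2 * of_int (kf (\<phi> + pi)) - 1) * t - pi" by (simp add: ps_def psi_def algebra_simps)
      then show ?thesis by blast
    qed
  qed
  have "range (\<lambda>j::int. (2 * of_int j - 1) * t) \<union> range (\<lambda>j::int. (2 * of_int j - 1) * t - pi) \<in> null_sets lborel"
    by (intro countable_imp_null_set_lborel) auto
  then show ?thesis using sub by (intro AE_I') auto
qed

end

context poly begin
lemma emeasure_S:
  assumes s0: "0 \<le> s" and sc: "SC s"
  shows "emeasure lborel {(p::real, \<phi>::real). 0 \<le> p \<and> 0 \<le> \<phi> \<and> \<phi> < 2 * pi \<and>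
        gline p \<phi> \<inter> reg_polygon n r \<noteq> {} \<and> chord_length (reg_polygon n r) p \<phi> \<le> s} = ennreal (real n * Iv s)"
proof -
  define S where "S = {(p::real, \<phi>::real). 0 \<le> p \<and> 0 \<le> \<phi> \<and> \<phi> < 2 * pi \<and>
        gline p \<phi> \<inter> reg_polygon n r \<noteq> {} \<and> chord_length (reg_polygon n r) p \<phi> \<le> s}"
  have SQ: "S = Q2 s \<inter> ({0..} \<times> {0..<2*pi})" by (auto simp: S_def Q2_def)
  have c: "({0..} \<times> {0..<2*pi} :: (real \<times> real) set) \<in> sets borel"
    by (intro borel_Times) auto
  have Ssets: "S \<in> sets (lborel \<Otimes>\<^sub>M lborel)"
    unfolding SQ lborel_prod sets_lborel by (rule sets.Int[OF Q2_borel[OF s0] c])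
  have mmm[measurable]: "mm s \<in> borel_measurable borel" by (rule mm_meas[OF s0])
  define E where "E = (\<integral>\<^sup>+\<phi>. indicator {0..<2*pi} \<phi> * mm s \<phi> \<partial>lborel)"
  define X where "X = (\<integral>\<^sup>+\<phi>. indicator {0..<2*pi} \<phi> * ennreal (Fr s \<phi>) \<partial>lborel)"
  have "emeasure lborel S = emeasure (lborel \<Otimes>\<^sub>M lborel) S" unfolding lborel_prod ..
  also have "\<dots> = (\<integral>\<^sup>+\<phi>. emeasure lborel ((\<lambda>x. (x, \<phi>)) -` S) \<partial>lborel)"
    by (rule lborel_pair.emeasure_pair_measure_alt2[OF Ssets])
  also have "\<dots> = E" unfolding E_def
  proof (intro nn_integral_cong)
    fix \<phi> :: real
    show "emeasure lborel ((\<lambda>x. (x, \<phi>)) -` S) = indicator {0..<2*pi} \<phi> * mm s \<phi>"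
    proof (cases "0 \<le> \<phi> \<and> \<phi> < 2*pi")
      case True
      then have "(\<lambda>x. (x, \<phi>)) -` S = Qs s \<phi> \<inter> {0..}" by (auto simp: S_def Qs_def)
      then show ?thesis using True by (simp add: mm_def)
    next
      case False
      then have "(\<lambda>x. (x, \<phi>)) -` S = {}" by (auto simp: S_def)
      then show ?thesis using False by (simp add: indicator_def)
    qed
  qed
  finally have ES: "emeasure lborel S = E" .
  have E2: "(\<integral>\<^sup>+\<phi>. indicator {0..<2*pi} \<phi> * mm s (\<phi> + pi) \<partial>lborel) = E"
    unfolding E_def by (rule shift_int[OF mmm mm_2pi]) (use pi_gt_zero in auto)
  have X2: "(\<integral>\<^sup>+\<phi>. indicator {0..<2*pi} \<phi> * ennreal (Fr s (\<phi> + pi)) \<partial>lborel) = X"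
  proof -
    have m: "(\<lambda>x. ennreal (Fr s x)) \<in> borel_measurable borel" by measurable
    show ?thesis unfolding X_def by (rule shift_int[OF m]) (use pi_gt_zero Fr_2pi in auto)
  qed
  have "E + E = (\<integral>\<^sup>+\<phi>. indicator {0..<2*pi} \<phi> * mm s \<phi> + indicator {0..<2*pi} \<phi> * mm s (\<phi> + pi) \<partial>lborel)"
    unfolding E_def by (subst nn_integral_add) (measurable, simp add: E2[unfolded E_def])
  also have "\<dots> = (\<integral>\<^sup>+\<phi>. indicator {0..<2*pi} \<phi> * ennreal (Fr s \<phi>) + indicator {0..<2*pi} \<phi> * ennreal (Fr s (\<phi> + pi)) \<partial>lborel)"
  proof (rule nn_integral_cong_AE)
    show "AE \<phi> in lborel. indicator {0..<2*pi} \<phi> * mm s \<phi> + indicator {0..<2*pi} \<phi> * mm s (\<phi> + pi) =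
        indicator {0..<2*pi} \<phi> * ennreal (Fr s \<phi>) + indicator {0..<2*pi} \<phi> * ennreal (Fr s (\<phi> + pi))"
      using AE_generic
    proof eventually_elim
      case (elim \<phi>)
      then have "mm s \<phi> + mm s (\<phi> + pi) = ennreal (Fr s \<phi>) + ennreal (Fr s (\<phi> + pi))"
        using mm_generic[OF s0 sc] Fr_nonneg[OF s0] by (simp add: ennreal_plus)
      then show ?case by (simp add: distrib_left[symmetric])
    qed
  qed
  also have "\<dots> = X + X"
    unfolding X_def by (subst nn_integral_add) (measurable, simp add: X2[unfolded X_def])
  finally have "2 * E = 2 * X" by (simp add: mult_2)
  then have "E = X" by (simp add: ennreal_mult_cancel_left)
  then show ?thesis using ES Fr_total[OF s0] by (simp add: S_def X_def)
qed

end


context poly begin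

lemma chord_dist_val:
  assumes s0: "0 \<le> s" and sc: "SC s"
  shows "chord_dist n r s = real n * Iv s / reg_perimeter n r"
proof -
  have "measure lborel {(p::real, \<phi>::real). 0 \<le> p \<and> 0 \<le> \<phi> \<and> \<phi> < 2 * pi \<and>
        gline p \<phi> \<inter> reg_polygon n r \<noteq> {} \<and> chord_length (reg_polygon n r) p \<phi> \<le> s} = real n * Iv s"
    unfolding measure_def emeasure_S[OF s0 sc] using Iv_nonneg[OF s0] by simp
  then show ?thesis unfolding chord_dist_def by simp
qed

lemma SC_n3:
  assumes "n = 3" "0 \<le> s" "s \<le> 2 * r * (cos (pi / (2 * real n)))^2"
  shows "SC s"
proof -
  have t3: "t = pi / 3" unfolding t_def using assms(1) by simp
  have c: "(cos (pi / (2 * real n)))^2 = 3/4" using assms(1) by (simp add: cos_30 power_divide)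
  have st: "2 * r * sin t * sin (2*t) = 2 * r * (3/4)"
  proof -
    have "sin t = sqrt 3 / 2" unfolding t3 by (rule sin_60)
    moreover have "sin (2*t) = sqrt 3 / 2" unfolding t3 using sin_120 by simp
    ultimately have "sin t * sin (2*t) = (sqrt 3 * sqrt 3) / 4" by (simp only:)
    then have "sin t * sin (2*t) = 3 / 4" by simp
    then show ?thesis by (simp add: mult.assoc)
  qed
  have "goodc s" unfolding goodc_def
  proof (intro allI impI)
    fix \<theta> :: real
    have "s * sin \<theta> \<le> s * 1" using assms(2) by (intro mult_left_mono) auto
    also have "\<dots> \<le> 2 * r * (3/4)" using assms(3) c by simp
    finally show "s * sin \<theta> \<le> 2 * r * sin t * sin (2*t)" unfolding st .
  qed
  then show ?thesis unfolding SC_def using assms(1) by blast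
qed

lemma SC_n4:
  assumes "4 \<le> n" "0 \<le> s" "s \<le> 2 * r * sin (pi / real n)"
  shows "SC s"
proof -
  have t4: "t \<le> pi / 4" using assms(1) n_pos unfolding t_def by (simp add: field_simps)
  have st: "0 < sin t" using t_pos t_le pi_gt3 by (intro sin_gt_zero) auto
  have "goods s" unfolding goods_def
  proof (intro allI impI)
    fix \<theta> :: real assume th: "0 < \<theta> \<and> \<theta> < 2*t"
    have sth: "0 < sin \<theta>" using th t_le pi_gt3 by (intro sin_gt_zero) auto
    have lt: "sin \<theta> < sin (2*t)" using th t4 by (subst sin_mono_less_eq) auto
    have "s * sin \<theta> \<le> (2 * r * sin t) * sin \<theta>" using assms(3) sth by (intro mult_right_mono) (auto simp: t_def)
    also have "\<dots> < (2 * r * sin t) * sin (2*t)" using lt rpos st by (intro mult_strict_left_mono) auto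
    finally show "s * sin \<theta> < 2 * r * sin t * sin (2*t)" .
  qed
  then show ?thesis unfolding SC_def using assms(1) by blast
qed

lemma final_alg:
  "real n * Iv s / reg_perimeter n r =
    ((1 - (pi / real n) * cot (pi / real n)) / sin (pi / real n)
      + (pi / real n) / cos (pi / real n)) * s / (4 * r)"
proof -
  have st: "sin t \<noteq> 0" using t_pos t_le pi_gt3 by (intro sin_gt_zero[THEN less_imp_neq, THEN not_sym]) auto
  have ct: "cos t \<noteq> 0" using t_pos t_le pi_gt3 by (intro cos_gt_zero_pi[THEN less_imp_neq, THEN not_sym]) auto
  have pn: "pi / real n = t" by (simp add: t_def)
  show ?thesis
    unfolding pn reg_perimeter_def Iv_def cot_def sin_double cos_double
    using st ct n_pos rpos by (simp add: field_simps power2_eq_square)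
qed

end

theorem mainTheorem2:
  fixes n :: nat and r s :: real
  assumes "n \<ge> 3" and "r > 0" and "0 \<le> s"
    and "(n = 3 \<and> s \<le> 2 * r * (cos (pi / (2 * real n)))^2) \<or>
         (n \<ge> 4 \<and> s \<le> 2 * r * sin (pi / real n))"
  shows "chord_dist n r s =
    ((1 - (pi / real n) * cot (pi / real n)) / sin (pi / real n)
      + (pi / real n) / cos (pi / real n)) * s / (4 * r)"
proof -
  interpret poly n r using assms(1,2) by unfold_locales
  have sc: "SC s" using assms(3,4) SC_n3 SC_n4 by blast
  show ?thesis using chord_dist_val[OF assms(3) sc] final_alg by simp
qed


end
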